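(* For every $\tau>1/2$ there is a constant $C>0$ such that for every $\gamma>0$, $$\mathrm{meas}\big(\mathfrak Q\setminus\mathfrak D(\gamma,\tau)\big)\le C\gamma.$$
   Context: $\mathfrak Q=\{\omega\in\mathbb R^{\mathbb Z}:|\omega_j-j^2|\le1/2\ \forall j\}=\prod_j[j^2-1/2,j^2+1/2]$, endowed with the product probability measure $\mathrm{meas}$ of the normalized Lebesgue measures on each factor. $\langle i\rangle=\max\{1,|i|\}$; $\mathbb Z^{\mathbb Z}_f$ = finitely supported integer sequences; $\mathfrak D(\gamma,\tau)=\{\omega\in\mathfrak Q:|\omega\cdot\nu|>\gamma\prod_i(1+\langle i\rangle^2|\nu_i|^2)^{-\tau}\ \forall\nu\in\mathbb Z^{\mathbb Z}_f\setminus\{0\}\}$, where $\omega\cdot\nu=\sum_i\omega_i\nu_i$. *)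

theory Defs
  imports "HOL-Probability.Probability"
begin

definition Qcube :: "(int \<Rightarrow> real) set" where
  "Qcube = {\<omega>. \<forall>j. \<bar>\<omega> j - (real_of_int j)^2\<bar> \<le> 1/2}"

definition meas :: "(int \<Rightarrow> real) measure" where
  "meas = (\<Pi>\<^sub>M j\<in>(UNIV::int set).
             uniform_measure lborel {(real_of_int j)^2 - 1/2 .. (real_of_int j)^2 + 1/2})"

definition jbr :: "int \<Rightarrow> real" where
  "jbr i = max 1 \<bar>real_of_int i\<bar>"

definition fin_supp :: "(int \<Rightarrow> int) \<Rightarrow> bool" where
  "fin_supp \<nu> \<longleftrightarrow> finite {i. \<nu> i \<noteq> 0}"

definition dotp :: "(int \<Rightarrow> real) \<Rightarrow> (int \<Rightarrow> int) \<Rightarrow> real" where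
  "dotp \<omega> \<nu> = (\<Sum>i\<in>{i. \<nu> i \<noteq> 0}. \<omega> i * real_of_int (\<nu> i))"

text \<open>prod_i (1 + <i>^2 |nu_i|^2)^(-tau); factors with nu_i = 0 equal 1.\<close>
definition wgt :: "real \<Rightarrow> (int \<Rightarrow> int) \<Rightarrow> real" where
  "wgt \<tau> \<nu> = (\<Prod>i\<in>{i. \<nu> i \<noteq> 0}.
      (1 + (jbr i)^2 * (real_of_int \<bar>\<nu> i\<bar>)^2) powr (-\<tau>))"

definition Dset :: "real \<Rightarrow> real \<Rightarrow> (int \<Rightarrow> real) set" where
  "Dset \<gamma> \<tau> = {\<omega> \<in> Qcube. \<forall>\<nu>. fin_supp \<nu> \<and> (\<exists>i. \<nu> i \<noteq> 0) \<longrightarrow>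
      \<bar>dotp \<omega> \<nu>\<bar> > \<gamma> * wgt \<tau> \<nu>}"

end

theory Submission
  imports Defs
begin


definition MM :: "int \<Rightarrow> real measure" where
  "MM j = uniform_measure lborel {(real_of_int j)^2 - 1/2 .. (real_of_int j)^2 + 1/2}"

lemma meas_MM: "meas = PiM UNIV MM"
  unfolding meas_def MM_def by simp

lemma prob_MM: "prob_space (MM j)"
  unfolding MM_def by (rule prob_space_uniform_measure) auto

lemma sets_MM[simp, measurable_cong]: "sets (MM j) = sets borel"
  unfolding MM_def by simp

lemma space_MM[simp]: "space (MM j) = UNIV"
  unfolding MM_def by simp

lemma pps: "product_prob_space MM"
  unfolding product_prob_space_def product_prob_space_axioms_def product_sigma_finite_def
  using prob_MM prob_space_imp_sigma_finite by blast

lemma prob_meas: "prob_space meas"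
  unfolding meas_MM by (rule prob_space_PiM) (rule prob_MM)

lemma space_meas[simp]: "space meas = UNIV"
  unfolding meas_MM by (simp add: space_PiM)

lemma comp_meas: "(\<lambda>\<omega>. \<omega> i) \<in> borel_measurable meas"
proof -
  have "(\<lambda>\<omega>. \<omega> i) \<in> measurable meas (MM i)"
    unfolding meas_MM by (rule measurable_component_singleton) simp
  then show ?thesis using measurable_cong_sets[OF refl sets_MM[of i], of meas] by simp
qed

lemma dotp_meas: "(\<lambda>\<omega>. dotp \<omega> \<nu>) \<in> borel_measurable meas"
  unfolding dotp_def using comp_meas by measurable

lemma Qcube_sets: "Qcube \<in> sets meas"
proof -
  have "Qcube = (\<Inter>j. (\<lambda>\<omega>. \<omega> j) -` {(real_of_int j)^2 - 1/2 .. (real_of_int j)^2 + 1/2} \<inter> space meas)"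
  proof -
    have key: "\<And>x c::real. (\<bar>x - c\<bar> \<le> 1/2) = (c - 1/2 \<le> x \<and> x \<le> c + 1/2)" by arith
    show ?thesis unfolding Qcube_def key by auto
  qed
  also have "\<dots> \<in> sets meas"
  proof (rule sets.countable_INT'')
    fix j :: int
    show "(\<lambda>\<omega>. \<omega> j) -` {(real_of_int j)^2 - 1/2 .. (real_of_int j)^2 + 1/2} \<inter> space meas \<in> sets meas"
      by (rule measurable_sets[OF comp_meas]) simp
  qed (use sets.top[of meas] in simp_all)
  finally show ?thesis .
qed


lemma comp_PiM: "(\<lambda>x. x i) \<in> borel_measurable (PiM J MM)" if "i \<in> J"
proof -
  have "(\<lambda>x. x i) \<in> measurable (PiM J MM) (MM i)"
    by (rule measurable_component_singleton) (rule that)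
  then show ?thesis using measurable_cong_sets[OF refl sets_MM[of i], of "PiM J MM"] by simp
qed

lemma interval_bound:
  fixes a c \<delta> :: real
  assumes "\<bar>a\<bar> \<ge> 1" "\<delta> \<ge> 0"
  shows "emeasure lborel {y. \<bar>y * a + c\<bar> \<le> \<delta>} \<le> ennreal (2 * \<delta>)"
proof -
  have a0: "a \<noteq> 0" using assms by auto
  have sub: "{y. \<bar>y * a + c\<bar> \<le> \<delta>} \<subseteq> {-c/a - \<delta>/\<bar>a\<bar> .. -c/a + \<delta>/\<bar>a\<bar>}"
  proof
    fix y assume "y \<in> {y. \<bar>y * a + c\<bar> \<le> \<delta>}"
    then have h: "\<bar>y * a + c\<bar> \<le> \<delta>" by simp
    have "y * a + c = a * (y + c/a)" using a0 by (simp add: field_simps)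
    then have "\<bar>a\<bar> * \<bar>y + c/a\<bar> \<le> \<delta>" using h by (simp add: abs_mult)
    then have "\<bar>y + c/a\<bar> \<le> \<delta>/\<bar>a\<bar>" using a0 by (simp add: field_simps mult.commute)
    then show "y \<in> {-c/a - \<delta>/\<bar>a\<bar> .. -c/a + \<delta>/\<bar>a\<bar>}" by (auto simp: abs_le_iff)
  qed
  have "emeasure lborel {y. \<bar>y * a + c\<bar> \<le> \<delta>} \<le> emeasure lborel {-c/a - \<delta>/\<bar>a\<bar> .. -c/a + \<delta>/\<bar>a\<bar>}"
    by (rule emeasure_mono[OF sub]) simp
  also have "\<dots> = ennreal (2 * (\<delta>/\<bar>a\<bar>))"
    using assms by (subst emeasure_lborel_Icc) (auto intro!: arg_cong[where f=ennreal])
  also have "\<dots> \<le> ennreal (2 * \<delta>)"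
  proof (rule ennreal_leI)
    have "\<delta>/\<bar>a\<bar> \<le> \<delta>" using assms by (simp add: divide_le_eq mult_le_cancel_left1 mult.commute)
    then show "2 * (\<delta>/\<bar>a\<bar>) \<le> 2 * \<delta>" by simp
  qed
  finally show ?thesis .
qed

lemma MM_bound:
  fixes a c \<delta> :: real
  assumes "\<bar>a\<bar> \<ge> 1" "\<delta> \<ge> 0"
  shows "emeasure (MM j) {y. \<bar>y * a + c\<bar> \<le> \<delta>} \<le> ennreal (2 * \<delta>)"
proof -
  let ?A = "{(real_of_int j)^2 - 1/2 .. (real_of_int j)^2 + 1/2}"
  have C: "{y. \<bar>y * a + c\<bar> \<le> \<delta>} \<in> sets borel" by measurable
  have "emeasure (MM j) {y. \<bar>y * a + c\<bar> \<le> \<delta>} = emeasure lborel (?A \<inter> {y. \<bar>y * a + c\<bar> \<le> \<delta>}) / emeasure lborel ?A"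
    unfolding MM_def using C by (subst emeasure_uniform_measure) auto
  also have "emeasure lborel ?A = 1" by simp
  also have "emeasure lborel (?A \<inter> {y. \<bar>y * a + c\<bar> \<le> \<delta>}) / 1 \<le> emeasure lborel {y. \<bar>y * a + c\<bar> \<le> \<delta>}"
  proof -
    have "emeasure lborel (?A \<inter> {y. \<bar>y * a + c\<bar> \<le> \<delta>}) \<le> emeasure lborel {y. \<bar>y * a + c\<bar> \<le> \<delta>}"
      by (rule emeasure_mono) (use C in auto)
    then show ?thesis by (simp add: divide_ennreal_def)
  qed
  also have "\<dots> \<le> ennreal (2 * \<delta>)" by (rule interval_bound[OF assms])
  finally show ?thesis .
qed



lemma dot_bound:
  assumes fs: "fin_supp \<nu>" and i0: "\<nu> i0 \<noteq> 0" and d: "\<delta> \<ge> 0"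
  shows "emeasure meas {\<omega>. \<bar>dotp \<omega> \<nu>\<bar> \<le> \<delta>} \<le> ennreal (2 * \<delta>)"
proof -
  interpret P: product_prob_space MM "UNIV::int set" by (rule pps)
  define S where "S = {i. \<nu> i \<noteq> 0}"
  define T where "T = S - {i0}"
  have finS: "finite S" using fs unfolding S_def fin_supp_def by simp
  have finT: "finite T" using finS unfolding T_def by simp
  have ST: "S = insert i0 T" "i0 \<notin> T" using i0 unfolding S_def T_def by auto
  define B where "B = {x \<in> space (PiM S MM). \<bar>\<Sum>i\<in>S. x i * real_of_int (\<nu> i)\<bar> \<le> \<delta>}"
  have Bs: "B \<in> sets (PiM S MM)"
  proof -
    have "(\<lambda>x. \<Sum>i\<in>S. x i * real_of_int (\<nu> i)) \<in> borel_measurable (PiM S MM)"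
      by (intro borel_measurable_sum borel_measurable_times comp_PiM) auto
    then show ?thesis unfolding B_def by measurable
  qed
  have eq: "{\<omega>. \<bar>dotp \<omega> \<nu>\<bar> \<le> \<delta>} = prod_emb UNIV MM S B"
    unfolding prod_emb_def B_def dotp_def S_def by (auto simp: space_PiM PiE_iff)
  have "emeasure meas {\<omega>. \<bar>dotp \<omega> \<nu>\<bar> \<le> \<delta>} = emeasure (PiM S MM) B"
    unfolding eq meas_MM by (rule P.emeasure_PiM_emb') (use finS Bs in auto)
  also have "\<dots> = (\<integral>\<^sup>+x. indicator B x \<partial>PiM S MM)"
    using Bs by simp
  also have "\<dots> = (\<integral>\<^sup>+x. (\<integral>\<^sup>+y. indicator B (x(i0 := y)) \<partial>MM i0) \<partial>PiM T MM)"
    unfolding ST(1) by (rule P.product_nn_integral_insert) (use finT ST Bs in auto)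
  also have "\<dots> \<le> (\<integral>\<^sup>+x. ennreal (2 * \<delta>) \<partial>PiM T MM)"
  proof (rule nn_integral_mono)
    fix x assume x: "x \<in> space (PiM T MM)"
    define c where "c = (\<Sum>i\<in>T. x i * real_of_int (\<nu> i))"
    have "\<And>y. indicator B (x(i0 := y)) = (indicator {y. \<bar>y * real_of_int (\<nu> i0) + c\<bar> \<le> \<delta>} y :: ennreal)"
    proof -
      fix y
      have sp: "x(i0 := y) \<in> space (PiM S MM)"
        using x ST unfolding space_PiM by (auto simp: PiE_iff)
      have "(\<Sum>i\<in>S. (x(i0 := y)) i * real_of_int (\<nu> i)) = y * real_of_int (\<nu> i0) + c"
        unfolding ST(1) c_def using finT ST(2)
        by (simp add: sum.insert) (intro sum.cong, auto)
      then show "indicator B (x(i0 := y)) = (indicator {y. \<bar>y * real_of_int (\<nu> i0) + c\<bar> \<le> \<delta>} y :: ennreal)"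
        using sp unfolding B_def by (simp add: indicator_def)
    qed
    then have "(\<integral>\<^sup>+y. indicator B (x(i0 := y)) \<partial>MM i0) = emeasure (MM i0) {y. \<bar>y * real_of_int (\<nu> i0) + c\<bar> \<le> \<delta>}"
      by (simp add: nn_integral_indicator del: indicator_simps)
    also have "\<dots> \<le> ennreal (2 * \<delta>)"
      by (rule MM_bound) (use i0 d in auto)
    finally show "(\<integral>\<^sup>+y. indicator B (x(i0 := y)) \<partial>MM i0) \<le> ennreal (2 * \<delta>)" .
  qed
  also have "\<dots> = ennreal (2 * \<delta>)"
  proof -
    interpret PT: prob_space "PiM T MM" by (rule prob_space_PiM) (rule prob_MM)
    show ?thesis by (simp add: PT.emeasure_space_1)
  qed
  finally show ?thesis .
qed



definition IN :: "nat \<Rightarrow> int set" where "IN N = {- int N .. int N}"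
definition VV :: "nat \<Rightarrow> (int \<Rightarrow> int) set" where
  "VV N = {\<nu>. (\<forall>i. \<nu> i \<noteq> 0 \<longrightarrow> \<bar>i\<bar> \<le> int N) \<and> (\<forall>i. \<bar>\<nu> i\<bar> \<le> int N)}"
definition ext :: "nat \<Rightarrow> (int \<Rightarrow> int) \<Rightarrow> (int \<Rightarrow> int)" where
  "ext N f = (\<lambda>i. if i \<in> IN N then f i else 0)"
definition hh :: "real \<Rightarrow> int \<Rightarrow> int \<Rightarrow> real" where
  "hh \<tau> i n = (1 + (jbr i)^2 * (real_of_int \<bar>n\<bar>)^2) powr (-\<tau>)"
definition pp :: "real \<Rightarrow> int \<Rightarrow> real" where
  "pp \<tau> n = jbr n powr (-2*\<tau>)"

lemma finite_IN[simp]: "finite (IN N)" unfolding IN_def by simp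

lemma VV_eq: "VV N = ext N ` PiE (IN N) (\<lambda>_. IN N)"
proof
  show "VV N \<subseteq> ext N ` PiE (IN N) (\<lambda>_. IN N)"
  proof
    fix \<nu> assume v: "\<nu> \<in> VV N"
    have "\<nu> = ext N (restrict \<nu> (IN N))"
    proof
      fix i show "\<nu> i = ext N (restrict \<nu> (IN N)) i"
      proof (cases "i \<in> IN N")
        case False
        then have "\<not> \<bar>i\<bar> \<le> int N" unfolding IN_def by (auto simp: abs_le_iff)
        then have "\<nu> i = 0" using v unfolding VV_def by blast
        then show ?thesis using False unfolding ext_def by simp
      qed (simp add: ext_def)
    qed
    moreover have "restrict \<nu> (IN N) \<in> PiE (IN N) (\<lambda>_. IN N)"
      using v unfolding VV_def IN_def by (auto simp: abs_le_iff) (metis minus_le_iff)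
    ultimately show "\<nu> \<in> ext N ` PiE (IN N) (\<lambda>_. IN N)" by blast
  qed
  show "ext N ` PiE (IN N) (\<lambda>_. IN N) \<subseteq> VV N"
  proof
    fix \<nu> assume "\<nu> \<in> ext N ` PiE (IN N) (\<lambda>_. IN N)"
    then obtain f where f: "f \<in> PiE (IN N) (\<lambda>_. IN N)" and nu: "\<nu> = ext N f" by blast
    have "\<bar>i\<bar> \<le> int N" if "\<nu> i \<noteq> 0" for i
      using that unfolding nu ext_def IN_def by (auto split: if_splits)
    moreover have "\<bar>\<nu> i\<bar> \<le> int N" for i
    proof (cases "i \<in> IN N")
      case True then have "f i \<in> IN N" using f by auto
      then show ?thesis using True unfolding nu ext_def IN_def by auto
    qed (simp add: nu ext_def)
    ultimately show "\<nu> \<in> VV N" unfolding VV_def by auto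
  qed
qed

lemma inj_ext: "inj_on (ext N) (PiE (IN N) (\<lambda>_. IN N))"
proof (rule inj_onI)
  fix f g assume f: "f \<in> PiE (IN N) (\<lambda>_. IN N)" and g: "g \<in> PiE (IN N) (\<lambda>_. IN N)"
    and e: "ext N f = ext N g"
  show "f = g"
  proof
    fix i show "f i = g i"
    proof (cases "i \<in> IN N")
      case True then show ?thesis using fun_cong[OF e, of i] unfolding ext_def by simp
    next
      case False then show ?thesis using f g by (simp add: PiE_iff extensional_def)
    qed
  qed
qed

lemma finite_VV: "finite (VV N)"
  unfolding VV_eq by (intro finite_imageI finite_PiE) auto

lemma hh0[simp]: "hh \<tau> i 0 = 1"
  unfolding hh_def by simp

lemma hh_nonneg: "hh \<tau> i n \<ge> 0" unfolding hh_def by simp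

lemma wgt_eq: assumes "\<nu> \<in> VV N" shows "wgt \<tau> \<nu> = (\<Prod>i\<in>IN N. hh \<tau> i (\<nu> i))"
proof -
  have sub: "{i. \<nu> i \<noteq> 0} \<subseteq> IN N" using assms unfolding VV_def IN_def by (auto simp: abs_le_iff)
  have "wgt \<tau> \<nu> = (\<Prod>i\<in>{i. \<nu> i \<noteq> 0}. hh \<tau> i (\<nu> i))"
    unfolding wgt_def hh_def by simp
  also have "\<dots> = (\<Prod>i\<in>IN N. hh \<tau> i (\<nu> i))"
    by (rule prod.mono_neutral_left) (use sub in auto)
  finally show ?thesis .
qed

lemma sum_VV: "(\<Sum>\<nu>\<in>VV N. wgt \<tau> \<nu>) = (\<Prod>i\<in>IN N. \<Sum>n\<in>IN N. hh \<tau> i n)"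
proof -
  have "(\<Sum>\<nu>\<in>VV N. wgt \<tau> \<nu>) = (\<Sum>\<nu>\<in>VV N. \<Prod>i\<in>IN N. hh \<tau> i (\<nu> i))"
    by (rule sum.cong) (auto simp: wgt_eq)
  also have "\<dots> = (\<Sum>f\<in>PiE (IN N) (\<lambda>_. IN N). \<Prod>i\<in>IN N. hh \<tau> i (ext N f i))"
    unfolding VV_eq by (subst sum.reindex[OF inj_ext]) simp
  also have "\<dots> = (\<Sum>f\<in>PiE (IN N) (\<lambda>_. IN N). \<Prod>i\<in>IN N. hh \<tau> i (f i))"
    by (intro sum.cong prod.cong) (auto simp: ext_def)
  also have "\<dots> = (\<Prod>i\<in>IN N. \<Sum>n\<in>IN N. hh \<tau> i n)"
    by (rule prod_sum_PiE[symmetric]) auto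
  finally show ?thesis .
qed

lemma jbr_ge1: "jbr i \<ge> 1" unfolding jbr_def by simp

lemma hh_le: assumes "n \<noteq> 0" "\<tau> \<ge> 0" shows "hh \<tau> i n \<le> pp \<tau> i * pp \<tau> n"
proof -
  have jn: "jbr n = real_of_int \<bar>n\<bar>" using assms unfolding jbr_def by simp
  have pos: "0 < (jbr i * jbr n)^2" using jbr_ge1[of i] jbr_ge1[of n] by simp
  have "hh \<tau> i n = (1 + (jbr i * jbr n)^2) powr (-\<tau>)"
    unfolding hh_def jn by (simp add: power_mult_distrib)
  also have "\<dots> \<le> ((jbr i * jbr n)^2) powr (-\<tau>)"
    using pos assms by (intro powr_mono2') auto
  also have "\<dots> = (jbr i * jbr n) powr (-2*\<tau>)"
  proof -
    have xp: "jbr i * jbr n > 0" using jbr_ge1[of i] jbr_ge1[of n] by simp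
    have "(jbr i * jbr n)^2 = (jbr i * jbr n) powr 2" using xp by (simp add: powr_numeral)
    then have "((jbr i * jbr n)^2) powr (-\<tau>) = ((jbr i * jbr n) powr 2) powr (-\<tau>)" by simp
    also have "\<dots> = (jbr i * jbr n) powr (2 * (-\<tau>))" by (rule powr_powr)
    finally show ?thesis by simp
  qed
  also have "\<dots> = pp \<tau> i * pp \<tau> n"
    unfolding pp_def using jbr_ge1[of i] jbr_ge1[of n] by (simp add: powr_mult)
  finally show ?thesis .
qed

lemma pp_nonneg: "pp \<tau> n \<ge> 0" unfolding pp_def by simp
lemma pp0[simp]: "pp \<tau> 0 = 1" unfolding pp_def jbr_def by simp

lemma sum_pp: "(\<Sum>n\<in>IN N. pp \<tau> n) = 1 + 2 * (\<Sum>k<N. real (k+1) powr (-2*\<tau>))"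
proof (induction N)
  case 0 then show ?case unfolding IN_def by simp
next
  case (Suc N)
  have e: "IN (Suc N) = insert (- int N - 1) (insert (int N + 1) (IN N))"
    unfolding IN_def by auto
  have j1: "jbr (int N + 1) = real (N+1)" "jbr (- int N - 1) = real (N+1)"
    unfolding jbr_def by auto
  have "(\<Sum>n\<in>IN (Suc N). pp \<tau> n) = pp \<tau> (- int N - 1) + pp \<tau> (int N + 1) + (\<Sum>n\<in>IN N. pp \<tau> n)"
    unfolding e by (subst sum.insert; simp add: IN_def)+
  then show ?case using Suc.IH unfolding pp_def j1 by simp
qed



definition Sm :: "real \<Rightarrow> real" where "Sm \<tau> = (\<Sum>k. real (k+1) powr (-2*\<tau>))"

lemma summ: assumes "\<tau> > 1/2" shows "summable (\<lambda>k. real (k+1) powr (-2*\<tau>))"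
proof -
  have "summable (\<lambda>k. real k powr (-2*\<tau>))" using assms by (subst summable_real_powr_iff) simp
  then have "summable (\<lambda>k. real (Suc k) powr (-2*\<tau>))" by (subst summable_Suc_iff)
  then show ?thesis by simp
qed

lemma G_le: assumes "\<tau> > 1/2" shows "(\<Sum>k<N. real (k+1) powr (-2*\<tau>)) \<le> Sm \<tau>"
  unfolding Sm_def by (rule sum_le_suminf[OF summ[OF assms]]) auto

lemma Sm_nonneg: assumes "\<tau> > 1/2" shows "Sm \<tau> \<ge> 0"
  unfolding Sm_def by (rule suminf_nonneg[OF summ[OF assms]]) simp

lemma sum_hh: assumes "\<tau> > 1/2"
  shows "(\<Sum>n\<in>IN N. hh \<tau> i n) \<le> 1 + 2 * Sm \<tau> * pp \<tau> i"
proof -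
  have z: "0 \<in> IN N" unfolding IN_def by simp
  have "(\<Sum>n\<in>IN N. hh \<tau> i n) = hh \<tau> i 0 + (\<Sum>n\<in>IN N - {0}. hh \<tau> i n)"
    using z by (subst sum.remove[of _ 0]) auto
  also have "\<dots> \<le> 1 + (\<Sum>n\<in>IN N - {0}. pp \<tau> i * pp \<tau> n)"
    using assms by (simp, intro sum_mono hh_le) auto
  also have "(\<Sum>n\<in>IN N - {0}. pp \<tau> i * pp \<tau> n) = pp \<tau> i * ((\<Sum>n\<in>IN N. pp \<tau> n) - 1)"
    using z by (simp add: sum_distrib_left[symmetric] sum_diff1)
  also have "\<dots> = pp \<tau> i * (2 * (\<Sum>k<N. real (k+1) powr (-2*\<tau>)))"
    by (simp add: sum_pp)
  also have "\<dots> \<le> pp \<tau> i * (2 * Sm \<tau>)"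
    using G_le[OF assms, of N] pp_nonneg[of \<tau> i] by (intro mult_left_mono) auto
  finally show ?thesis by (simp add: algebra_simps)
qed

lemma sum_VV_bound: assumes "\<tau> > 1/2"
  shows "(\<Sum>\<nu>\<in>VV N. wgt \<tau> \<nu>) \<le> exp (2 * Sm \<tau> * (1 + 2 * Sm \<tau>))"
proof -
  have "(\<Sum>\<nu>\<in>VV N. wgt \<tau> \<nu>) = (\<Prod>i\<in>IN N. \<Sum>n\<in>IN N. hh \<tau> i n)" by (rule sum_VV)
  also have "\<dots> \<le> (\<Prod>i\<in>IN N. exp (2 * Sm \<tau> * pp \<tau> i))"
  proof (rule prod_mono)
    fix i assume "i \<in> IN N"
    have "(\<Sum>n\<in>IN N. hh \<tau> i n) \<le> 1 + 2 * Sm \<tau> * pp \<tau> i" by (rule sum_hh[OF assms])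
    also have "\<dots> \<le> exp (2 * Sm \<tau> * pp \<tau> i)" by (rule exp_ge_add_one_self)
    finally show "0 \<le> (\<Sum>n\<in>IN N. hh \<tau> i n) \<and> (\<Sum>n\<in>IN N. hh \<tau> i n) \<le> exp (2 * Sm \<tau> * pp \<tau> i)"
      by (simp add: sum_nonneg hh_nonneg)
  qed
  also have "\<dots> = exp (2 * Sm \<tau> * (\<Sum>i\<in>IN N. pp \<tau> i))"
    by (simp add: exp_sum sum_distrib_left)
  also have "\<dots> \<le> exp (2 * Sm \<tau> * (1 + 2 * Sm \<tau>))"
  proof -
    have "(\<Sum>i\<in>IN N. pp \<tau> i) \<le> 1 + 2 * Sm \<tau>" using G_le[OF assms, of N] by (simp add: sum_pp)
    then show ?thesis using Sm_nonneg[OF assms] by (simp add: mult_left_mono)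
  qed
  finally show ?thesis .
qed



lemma wgt_nonneg: "wgt \<tau> \<nu> \<ge> 0" unfolding wgt_def by (simp add: prod_nonneg)

lemma VV_mono: assumes "N \<le> M" shows "VV N \<subseteq> VV M"
proof
  fix \<nu> assume v: "\<nu> \<in> VV N"
  have NM: "int N \<le> int M" using assms by simp
  have "\<bar>i\<bar> \<le> int M" if "\<nu> i \<noteq> 0" for i
  proof -
    have "\<bar>i\<bar> \<le> int N" using v that unfolding VV_def by blast
    then show ?thesis using NM by linarith
  qed
  moreover have "\<bar>\<nu> i\<bar> \<le> int M" for i
  proof -
    have "\<bar>\<nu> i\<bar> \<le> int N" using v unfolding VV_def by blast
    then show ?thesis using NM by linarith
  qed
  ultimately show "\<nu> \<in> VV M" unfolding VV_def by blast
qed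

lemma in_some_VV:
  assumes "fin_supp \<nu>" shows "\<exists>N. \<nu> \<in> VV N"
proof -
  define S where "S = {i. \<nu> i \<noteq> 0}"
  have fS: "finite S" using assms unfolding fin_supp_def S_def by simp
  define N where "N = nat (\<Sum>i\<in>S. \<bar>i\<bar> + \<bar>\<nu> i\<bar>)"
  have b: "\<bar>i\<bar> + \<bar>\<nu> i\<bar> \<le> int N" if "i \<in> S" for i
  proof -
    have "\<bar>i\<bar> + \<bar>\<nu> i\<bar> \<le> (\<Sum>i\<in>S. \<bar>i\<bar> + \<bar>\<nu> i\<bar>)"
      by (rule member_le_sum) (use that fS in auto)
    then show ?thesis unfolding N_def by linarith
  qed
  have "\<nu> \<in> VV N"
    unfolding VV_def
  proof (intro CollectI conjI allI impI)
    fix i assume "\<nu> i \<noteq> 0" then have "i \<in> S" unfolding S_def by simp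
    from b[OF this] show "\<bar>i\<bar> \<le> int N" by simp
  next
    fix i show "\<bar>\<nu> i\<bar> \<le> int N"
    proof (cases "i \<in> S")
      case True from b[OF this] show ?thesis by simp
    next
      case False then show ?thesis unfolding S_def by simp
    qed
  qed
  then show ?thesis by blast
qed

theorem lemmaB3:
  fixes \<tau> :: real
  assumes "\<tau> > 1/2"
  shows "\<exists>C>0. \<forall>\<gamma>>0. Qcube - Dset \<gamma> \<tau> \<in> sets meas \<and>
           measure meas (Qcube - Dset \<gamma> \<tau>) \<le> C * \<gamma>"
proof -
  interpret PM: prob_space meas by (rule prob_meas)
  define K where "K = exp (2 * Sm \<tau> * (1 + 2 * Sm \<tau>))"
  have K0: "K > 0" unfolding K_def by simp
  have main: "Qcube - Dset \<gamma> \<tau> \<in> sets meas \<and> measure meas (Qcube - Dset \<gamma> \<tau>) \<le> (2 * K) * \<gamma>"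
    if g: "\<gamma> > 0" for \<gamma>
  proof -
    define A where "A \<nu> = {\<omega>\<in>Qcube. \<bar>dotp \<omega> \<nu>\<bar> \<le> \<gamma> * wgt \<tau> \<nu>}" for \<nu>
    define E where "E N = (\<Union>\<nu>\<in>VV N - {\<lambda>_. 0}. A \<nu>)" for N
    have As: "A \<nu> \<in> sets meas" for \<nu>
    proof -
      have [measurable]: "(\<lambda>\<omega>. dotp \<omega> \<nu>) \<in> borel_measurable meas" by (rule dotp_meas)
      have "A \<nu> = Qcube \<inter> {\<omega>\<in>space meas. \<bar>dotp \<omega> \<nu>\<bar> \<le> \<gamma> * wgt \<tau> \<nu>}"
        unfolding A_def by auto
      also have "\<dots> \<in> sets meas" using Qcube_sets by measurable
      finally show ?thesis .
    qed
    have Es: "E N \<in> sets meas" for N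
      unfolding E_def using finite_VV[of N] As by (intro sets.finite_UN) auto
    have eq: "Qcube - Dset \<gamma> \<tau> = (\<Union>N. E N)"
    proof
      show "Qcube - Dset \<gamma> \<tau> \<subseteq> (\<Union>N. E N)"
      proof
        fix \<omega> assume w: "\<omega> \<in> Qcube - Dset \<gamma> \<tau>"
        then obtain \<nu> where v: "fin_supp \<nu>" "\<exists>i. \<nu> i \<noteq> 0" "\<not> \<bar>dotp \<omega> \<nu>\<bar> > \<gamma> * wgt \<tau> \<nu>"
          unfolding Dset_def by auto
        obtain N where N: "\<nu> \<in> VV N" using in_some_VV[OF v(1)] by blast
        have "\<nu> \<noteq> (\<lambda>_. 0)" using v(2) by auto
        moreover have "\<omega> \<in> A \<nu>" using w v(3) unfolding A_def by auto
        ultimately have "\<omega> \<in> E N" unfolding E_def using N by blast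
        then show "\<omega> \<in> (\<Union>N. E N)" by blast
      qed
      show "(\<Union>N. E N) \<subseteq> Qcube - Dset \<gamma> \<tau>"
      proof
        fix \<omega> assume "\<omega> \<in> (\<Union>N. E N)"
        then obtain N \<nu> where N: "\<nu> \<in> VV N" "\<nu> \<noteq> (\<lambda>_. 0)" "\<omega> \<in> A \<nu>"
          unfolding E_def by blast
        have "{i. \<nu> i \<noteq> 0} \<subseteq> {- int N .. int N}"
          using N(1) unfolding VV_def by (auto simp: abs_le_iff)
        then have fs: "fin_supp \<nu>" unfolding fin_supp_def by (rule finite_subset) simp
        have nz: "\<exists>i. \<nu> i \<noteq> 0" using N(2) by auto
        show "\<omega> \<in> Qcube - Dset \<gamma> \<tau>"
          using N(3) fs nz unfolding A_def Dset_def by auto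
      qed
    qed
    have inc: "incseq E"
      unfolding incseq_def E_def using VV_mono by blast
    have EN: "measure meas (E N) \<le> (2 * K) * \<gamma>" for N
    proof -
      have "measure meas (E N) \<le> (\<Sum>\<nu>\<in>VV N - {\<lambda>_. 0}. measure meas (A \<nu>))"
        unfolding E_def using finite_VV[of N] As by (intro measure_UNION_le) auto
      also have "\<dots> \<le> (\<Sum>\<nu>\<in>VV N - {\<lambda>_. 0}. 2 * \<gamma> * wgt \<tau> \<nu>)"
      proof (rule sum_mono)
        fix \<nu> assume v: "\<nu> \<in> VV N - {\<lambda>_. 0}"
        have "{i. \<nu> i \<noteq> 0} \<subseteq> {- int N .. int N}"
          using v unfolding VV_def by (auto simp: abs_le_iff)
        then have fs: "fin_supp \<nu>" unfolding fin_supp_def by (rule finite_subset) simp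
        obtain i0 where i0: "\<nu> i0 \<noteq> 0" using v by auto
        have d: "\<gamma> * wgt \<tau> \<nu> \<ge> 0" using g wgt_nonneg[of \<tau> \<nu>] by simp
        have [measurable]: "(\<lambda>\<omega>. dotp \<omega> \<nu>) \<in> borel_measurable meas" by (rule dotp_meas)
        have Bs: "{\<omega>. \<bar>dotp \<omega> \<nu>\<bar> \<le> \<gamma> * wgt \<tau> \<nu>} \<in> sets meas"
        proof -
          have "{\<omega>. \<bar>dotp \<omega> \<nu>\<bar> \<le> \<gamma> * wgt \<tau> \<nu>} = {\<omega>\<in>space meas. \<bar>dotp \<omega> \<nu>\<bar> \<le> \<gamma> * wgt \<tau> \<nu>}"
            by simp
          also have "\<dots> \<in> sets meas" by measurable
          finally show ?thesis .
        qed
        have "measure meas (A \<nu>) \<le> measure meas {\<omega>. \<bar>dotp \<omega> \<nu>\<bar> \<le> \<gamma> * wgt \<tau> \<nu>}"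
          by (rule PM.finite_measure_mono) (use Bs in \<open>auto simp: A_def\<close>)
        also have "\<dots> \<le> 2 * (\<gamma> * wgt \<tau> \<nu>)"
        proof -
          have "ennreal (measure meas {\<omega>. \<bar>dotp \<omega> \<nu>\<bar> \<le> \<gamma> * wgt \<tau> \<nu>}) \<le> ennreal (2 * (\<gamma> * wgt \<tau> \<nu>))"
            using dot_bound[OF fs i0 d] by (simp add: PM.emeasure_eq_measure)
          then show ?thesis using d by (simp add: ennreal_le_iff)
        qed
        finally show "measure meas (A \<nu>) \<le> 2 * \<gamma> * wgt \<tau> \<nu>" by simp
      qed
      also have "\<dots> \<le> (\<Sum>\<nu>\<in>VV N. 2 * \<gamma> * wgt \<tau> \<nu>)"
        using finite_VV[of N] g wgt_nonneg by (intro sum_mono2) auto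
      also have "\<dots> = 2 * \<gamma> * (\<Sum>\<nu>\<in>VV N. wgt \<tau> \<nu>)" by (simp add: sum_distrib_left)
      also have "\<dots> \<le> 2 * \<gamma> * K"
        unfolding K_def using g sum_VV_bound[OF assms, of N] by (intro mult_left_mono) auto
      finally show ?thesis by (simp add: algebra_simps)
    qed
    have lim: "(\<lambda>N. measure meas (E N)) \<longlonglongrightarrow> measure meas (\<Union>N. E N)"
      by (rule PM.finite_Lim_measure_incseq) (use Es inc in auto)
    have "measure meas (\<Union>N. E N) \<le> (2 * K) * \<gamma>"
      by (rule LIMSEQ_le_const2[OF lim]) (use EN in auto)
    moreover have "(\<Union>N. E N) \<in> sets meas" using Es by (intro sets.countable_UN) auto
    ultimately show ?thesis unfolding eq by simp
  qed
  show ?thesis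
    by (rule exI[of _ "2 * K"]) (use K0 main in auto)
qed


end
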